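(* Let $G$ be a bipartite graph on $[n]\times[n]'$ with two edge colors, whose red edges form a perfect matching ($n$ red edges) and whose blue edges are generated as a bipartite Erdős–Rényi graph with edge probability $D/n$. If $n\ge525$ and $D\ge256\log(32e)$, then with probability at least $1-\exp(-Dn/2^{14})$, $G$ contains at least $\exp(n/20)$ distinct alternating cycles of length at least $3n/4$.
   Context: An alternating cycle is a cycle in $G$ whose edges alternate between red and blue. *)

theory Defs
  imports "HOL-Probability.Probability"
begin

text \<open>Vertices of the bipartite graph on [n] x [n]': left vertices Inl i, right vertices Inr j,
  with i, j in {0..<n}.  Colours: True = red, False = blue.
  Red edges: the perfect matching {Inl i, Inr (sigma i)}.  Blue edges: pairs (i,j) in B,
  meaning the edge {Inl i, Inr j}.\<close>

definition bip_vertices :: "nat \<Rightarrow> (nat + nat) set" where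
  "bip_vertices n = Inl ` {..<n} \<union> Inr ` {..<n}"

definition col_edge :: "(nat \<Rightarrow> nat) \<Rightarrow> (nat \<times> nat) set \<Rightarrow> bool \<Rightarrow> nat + nat \<Rightarrow> nat + nat \<Rightarrow> bool" where
  "col_edge \<sigma> B c u v \<longleftrightarrow>
     (\<exists>i j. {u, v} = {Inl i, Inr j} \<and> (if c then j = \<sigma> i else (i, j) \<in> B))"

definition alt_cycle :: "nat \<Rightarrow> (nat \<Rightarrow> nat) \<Rightarrow> (nat \<times> nat) set \<Rightarrow> (nat + nat) list \<Rightarrow> bool list \<Rightarrow> bool" where
  "alt_cycle n \<sigma> B vs cs \<longleftrightarrow>
     length cs = length vs \<and> length vs \<ge> 3 \<and> distinct vs \<and> set vs \<subseteq> bip_vertices n \<and>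
     (\<forall>t < length vs. col_edge \<sigma> B (cs ! t) (vs ! t) (vs ! ((t + 1) mod length vs))) \<and>
     (\<forall>t < length vs. cs ! ((t + 1) mod length vs) \<noteq> cs ! t)"

text \<open>A cycle, as a subgraph, is identified with its set of coloured edges.\<close>

definition cycle_edges :: "(nat + nat) list \<Rightarrow> bool list \<Rightarrow> (bool \<times> (nat + nat) set) set" where
  "cycle_edges vs cs = {(cs ! t, {vs ! t, vs ! ((t + 1) mod length vs)}) | t. t < length vs}"

definition long_alt_cycles :: "nat \<Rightarrow> (nat \<Rightarrow> nat) \<Rightarrow> (nat \<times> nat) set \<Rightarrow> real \<Rightarrow> (bool \<times> (nat + nat) set) set set" where
  "long_alt_cycles n \<sigma> B L =
     {cycle_edges vs cs | vs cs. alt_cycle n \<sigma> B vs cs \<and> real (length vs) \<ge> L}"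

text \<open>Bipartite Erdos-Renyi random graph: each pair in [n] x [n] independently with probability D/n
  (bernoulli_pmf clamps the parameter to [0,1]).\<close>

definition bip_ER :: "nat \<Rightarrow> real \<Rightarrow> (nat \<times> nat \<Rightarrow> bool) pmf" where
  "bip_ER n D = Pi_pmf ({..<n} \<times> {..<n}) False (\<lambda>_. bernoulli_pmf (D / real n))"

end

theory Submission
  imports Defs
begin

definition dpath :: "('v \<Rightarrow> 'v \<Rightarrow> bool) \<Rightarrow> 'v list \<Rightarrow> bool" where
  "dpath a p \<longleftrightarrow> distinct p \<and> (\<forall>i. Suc i < length p \<longrightarrow> a (p!i) (p!Suc i))"

definition expand :: "nat \<Rightarrow> 'v set \<Rightarrow> ('v \<Rightarrow> 'v \<Rightarrow> bool) \<Rightarrow> bool" where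
  "expand k W a \<longleftrightarrow> (\<forall>S T. S \<subseteq> W \<longrightarrow> T \<subseteq> W \<longrightarrow> card S = k \<longrightarrow> card T = k \<longrightarrow>
      S \<inter> T = {} \<longrightarrow> (\<exists>s\<in>S. \<exists>t\<in>T. a s t))"

lemma dfs_state:
  assumes W: "finite W" and ex: "expand k W a" and k: "k \<ge> 1"
  shows "card T - card S = d \<Longrightarrow> card S \<le> card T \<Longrightarrow> S \<inter> set U = {} \<Longrightarrow> S \<inter> T = {}
    \<Longrightarrow> set U \<inter> T = {} \<Longrightarrow> S \<union> set U \<union> T = W \<Longrightarrow> dpath a U
    \<Longrightarrow> (\<forall>s\<in>S. \<forall>t\<in>T. \<not> a s t)
    \<Longrightarrow> \<exists>p. dpath a p \<and> set p \<subseteq> W \<and> card W + 1 \<le> length p + 2*k"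
proof (induction d arbitrary: S U T rule: less_induct)
  case (less d)
  have fS: "finite S" and fT: "finite T" using less.prems W by (metis finite_Un)+
  have dU: "distinct U" using less.prems(7) by (simp add: dpath_def)
  have cW: "card W = card S + length U + card T"
  proof -
    have "card W = card (S \<union> set U) + card T"
      using less.prems fS fT by (metis List.finite_set card_Un_disjoint finite_UnI inf_sup_distrib2 sup_bot.right_neutral)
    also have "card (S \<union> set U) = card S + length U"
      using less.prems(3) fS dU by (simp add: card_Un_disjoint distinct_card)
    finally show ?thesis .
  qed
  show ?case
  proof (cases "d \<le> 1")
    case True
    have "card S < k"
    proof (rule ccontr)
      assume "\<not> card S < k"
      then obtain S' where S': "S' \<subseteq> S" "card S' = k" using obtain_subset_with_card_n by (metis not_less)
      have "k \<le> card T" using \<open>\<not> card S < k\<close> less.prems(2) by linarith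
      then obtain T' where T': "T' \<subseteq> T" "card T' = k" using obtain_subset_with_card_n by metis
      have "S' \<subseteq> W" "T' \<subseteq> W" using S' T' less.prems(6) by auto
      moreover have "S' \<inter> T' = {}" using S' T' less.prems(4) by auto
      ultimately obtain s t where "s \<in> S'" "t \<in> T'" "a s t" using ex S' T' unfolding expand_def by metis
      then show False using S' T' less.prems(8) by auto
    qed
    then have "card W + 1 \<le> length U + 2*k" using cW True less.prems(1,2) by linarith
    moreover have "set U \<subseteq> W" using less.prems(6) by auto
    ultimately show ?thesis using less.prems(7) by blast
  next
    case False
    show ?thesis
    proof (cases "U = []")
      case True
      have "T \<noteq> {}" using False less.prems(1) by auto
      then obtain t where t: "t \<in> T" by auto
      have "card (T - {t}) = card T - 1" using t fT by simp
      show ?thesis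
        apply (rule less.IH[where S=S and U="[t]" and T="T - {t}"])
        using less.prems True t \<open>card (T - {t}) = card T - 1\<close> False
        by (auto simp: dpath_def)
    next
      case Un: False
      show ?thesis
      proof (cases "\<exists>t\<in>T. a (last U) t")
        case True
        then obtain t where t: "t \<in> T" "a (last U) t" by auto
        have ct: "card (T - {t}) = card T - 1" using t fT by simp
        have "dpath a (U @ [t])"
          unfolding dpath_def
        proof (intro conjI allI impI)
          show "distinct (U @ [t])" using dU t less.prems(5) by auto
          fix i assume i: "Suc i < length (U @ [t])"
          show "a ((U @ [t]) ! i) ((U @ [t]) ! Suc i)"
          proof (cases "Suc i < length U")
            case True
            then show ?thesis using less.prems(7) by (simp add: dpath_def nth_append)
          next
            case False
            then have "Suc i = length U" using i by simp
            then have "i = length U - 1" by simp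
            then show ?thesis using t Un \<open>Suc i = length U\<close> by (simp add: nth_append last_conv_nth)
          qed
        qed
        moreover have "S \<union> set (U @ [t]) \<union> (T - {t}) = W" using less.prems(6) t by auto
        ultimately show ?thesis
          apply (intro less.IH[where S=S and U="U @ [t]" and T="T - {t}"])
          using less.prems t ct False by auto
      next
        case nT: False
        define x where "x = last U"
        have xU: "x \<in> set U" using Un x_def by simp
        have U': "U = butlast U @ [x]" using Un x_def by simp
        have xnb: "x \<notin> set (butlast U)" using dU U' by (metis distinct_append disjoint_iff list.set_intros(1))
        have cS: "card (insert x S) = card S + 1" proof -
          have "x \<notin> S" using xU less.prems(3) by auto
          then show ?thesis using fS by simp
        qed
        have dp: "dpath a (butlast U)"
          using less.prems(7) unfolding dpath_def
          by (simp add: nth_butlast distinct_butlast)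
        have e1: "insert x S \<union> set (butlast U) \<union> T = W"
        proof -
          have "set U = insert x (set (butlast U))" using U' by (metis set_append empty_set list.simps(15) Un_insert_right sup_bot.right_neutral)
          then show ?thesis using less.prems(6) by blast
        qed
        have e2: "insert x S \<inter> set (butlast U) = {}"
          using less.prems(3) xnb by (blast dest: in_set_butlastD)
        have e3: "set (butlast U) \<inter> T = {}" using less.prems(5) by (blast dest: in_set_butlastD)
        have e4: "insert x S \<inter> T = {}" using less.prems(4,5) xU by blast
        have e5: "\<forall>s\<in>insert x S. \<forall>t\<in>T. \<not> a s t" using less.prems(8) nT x_def by blast
        have e6: "card (insert x S) \<le> card T" using cS False less.prems(1) by linarith
        have e7: "card T - card (insert x S) = d - 1" using cS less.prems(1) by linarith
        have e8: "d - 1 < d" using False by linarith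
        show ?thesis
          by (rule less.IH[where S="insert x S" and U="butlast U" and T=T, OF e8 e7 e6 e2 e4 e3 e1 dp e5])
      qed
    qed
  qed
qed

definition dcycle :: "('v \<Rightarrow> 'v \<Rightarrow> bool) \<Rightarrow> 'v list \<Rightarrow> bool" where
  "dcycle a c \<longleftrightarrow> distinct c \<and> length c \<ge> 2 \<and> (\<forall>t<length c. a (c!t) (c!((t+1) mod length c)))"

lemma exists_path:
  assumes W: "finite W" and ex: "expand k W a" and k: "k \<ge> 1"
  shows "\<exists>p. dpath a p \<and> set p \<subseteq> W \<and> card W + 1 \<le> length p + 2*k"
  by (rule dfs_state[OF W ex k, where S="{}" and U="[]" and T=W and d="card W"]) (auto simp: dpath_def)

lemma exists_cycle:
  assumes W: "finite W" and ex: "expand k W a" and k: "k \<ge> 1" and Wk: "4*k \<le> card W"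
  shows "\<exists>c. dcycle a c \<and> set c \<subseteq> W \<and> card W + 3 \<le> length c + 4*k"
proof -
  obtain p where p: "dpath a p" "set p \<subseteq> W" "card W + 1 \<le> length p + 2*k"
    using exists_path[OF W ex k] by blast
  define L where "L = length p"
  have dp: "distinct p" using p(1) by (simp add: dpath_def)
  have L2: "2*k + 1 \<le> L" using p(3) Wk L_def by linarith
  define S' where "S' = set (drop (L-k) p)"
  define T' where "T' = set (take k p)"
  have cS: "card S' = k" unfolding S'_def using dp L2 L_def by (simp add: distinct_card)
  have cT: "card T' = k" unfolding T'_def using dp L2 L_def by (simp add: distinct_card)
  have disj: "S' \<inter> T' = {}" unfolding S'_def T'_def
  proof -
    have "k \<le> L - k" using L2 by linarith
    then show "set (drop (L - k) p) \<inter> set (take k p) = {}"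
      using set_take_disj_set_drop_if_distinct[OF dp, of k "L-k"] by blast
  qed
  have sub: "S' \<subseteq> W" "T' \<subseteq> W" unfolding S'_def T'_def using p(2)
    by (auto dest: in_set_dropD in_set_takeD)
  obtain s t where st: "s \<in> S'" "t \<in> T'" "a s t" using ex sub cS cT disj unfolding expand_def by metis
  obtain r where r: "r < k" "s = p ! (L - k + r)"
    using st(1) L2 unfolding S'_def L_def by (auto simp: in_set_conv_nth)
  obtain i where i: "i < k" "t = p ! i"
    using st(2) L2 unfolding T'_def L_def by (auto simp: in_set_conv_nth)
  define j where "j = L - k + r"
  have jL: "j < L" "i < j" using r i L2 j_def by auto
  define c where "c = map (\<lambda>q. p ! (i + q)) [0..<j - i + 1]"
  have lc: "length c = j - i + 1" by (simp add: c_def del: upt_Suc)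
  have cn: "\<And>q. q < length c \<Longrightarrow> c ! q = p ! (i + q)" by (simp add: c_def del: upt_Suc)
  have "distinct c"
    unfolding distinct_conv_nth
  proof (intro allI impI)
    fix x y assume "x < length c" "y < length c" "x \<noteq> y"
    then show "c ! x \<noteq> c ! y" using cn dp jL lc L_def by (simp add: nth_eq_iff_index_eq)
  qed
  moreover have "\<forall>q<length c. a (c!q) (c!((q+1) mod length c))"
  proof (intro allI impI)
    fix q assume q: "q < length c"
    show "a (c!q) (c!((q+1) mod length c))"
    proof (cases "q + 1 < length c")
      case True
      then have "Suc (i + q) < length p" using lc jL L_def by linarith
      then show ?thesis using True p(1) cn q by (simp add: dpath_def)
    next
      case False
      then have "q + 1 = length c" using q by simp
      then have "(q+1) mod length c = 0" "i + q = j" using lc jL by auto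
      then show ?thesis using cn q st(3) r i j_def lc by simp
    qed
  qed
  moreover have "set c \<subseteq> W"
    using p(2) jL L_def unfolding c_def by auto
  moreover have "card W + 3 \<le> length c + 4*k" using lc j_def i r p(3) L_def jL by linarith
  moreover have "length c \<ge> 2" using lc jL by linarith
  ultimately show ?thesis unfolding dcycle_def by blast
qed

definition lft :: "(bool \<times> (nat + nat) set) set \<Rightarrow> nat set" where
  "lft E = {i. \<exists>col e. (col, e) \<in> E \<and> Inl i \<in> e}"

lemma lft_cycle_edges:
  assumes "length vs > 0"
  shows "lft (cycle_edges vs cs) = {i. Inl i \<in> set vs}"
proof (intro equalityI subsetI)
  fix i assume "i \<in> lft (cycle_edges vs cs)"
  then obtain t where t: "t < length vs" "Inl i \<in> {vs ! t, vs ! ((t + 1) mod length vs)}"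
    unfolding lft_def cycle_edges_def by blast
  then show "i \<in> {i. Inl i \<in> set vs}" using assms by auto
next
  fix i assume "i \<in> {i. Inl i \<in> set vs}"
  then obtain t where t: "t < length vs" "vs ! t = Inl i" by (auto simp: in_set_conv_nth)
  then have "(cs ! t, {vs ! t, vs ! ((t + 1) mod length vs)}) \<in> cycle_edges vs cs"
    unfolding cycle_edges_def by blast
  then show "i \<in> lft (cycle_edges vs cs)" using t unfolding lft_def by auto
qed

lemma mod_suc_eq: "t < (N::nat) \<Longrightarrow> (t + 1) mod N = (if t + 1 = N then 0 else t + 1)"
  by auto

lemma alt_from_dcycle:
  fixes c :: "nat list"
  assumes inj: "inj_on \<sigma> {..<n}" and sig: "\<sigma> ` {..<n} \<subseteq> {..<n}"
    and dc: "dcycle (\<lambda>i j. (i, \<sigma> j) \<in> B) c" and sc: "set c \<subseteq> {..<n}"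
  defines "vs \<equiv> map (\<lambda>t. if even t then Inl (c!(t div 2)) else Inr (\<sigma> (c!((t div 2 + 1) mod length c)))) [0..<2*length c]"
    and "cs \<equiv> map odd [0..<2*length c]"
  shows "alt_cycle n \<sigma> B vs cs \<and> length vs = 2 * length c \<and> lft (cycle_edges vs cs) = set c"
proof -
  define L where "L = length c"
  define N where "N = 2 * L"
  have L2: "L \<ge> 2" using dc unfolding dcycle_def L_def by auto
  have dcs: "distinct c" using dc unfolding dcycle_def by auto
  have arcs: "\<And>q. q < L \<Longrightarrow> (c!q, \<sigma> (c!((q+1) mod L))) \<in> B" using dc unfolding dcycle_def L_def by auto
  have cn: "\<And>q. q < L \<Longrightarrow> c ! q < n" using sc L_def nth_mem by fastforce
  have lv: "length vs = N" and lcs: "length cs = N" by (simp_all add: vs_def cs_def N_def L_def)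
  have vn: "\<And>t. t < N \<Longrightarrow> vs ! t = (if even t then Inl (c!(t div 2)) else Inr (\<sigma> (c!((t div 2 + 1) mod L))))"
    by (simp add: vs_def N_def L_def)
  have csn: "\<And>t. t < N \<Longrightarrow> cs ! t = odd t" by (simp add: cs_def N_def L_def)
  have modL: "\<And>q. q < L \<Longrightarrow> (q + 1) mod L < L" using L2 by auto
  have oddnext: "\<And>t. t < N \<Longrightarrow> odd t \<Longrightarrow> (t + 1) mod N = 2 * ((t div 2 + 1) mod L)"
  proof -
    fix t assume t: "t < N" "odd t"
    then have tt: "t = 2 * (t div 2) + 1" by simp
    show "(t + 1) mod N = 2 * ((t div 2 + 1) mod L)"
    proof (cases "t + 1 = N")
      case True
      then have "t div 2 + 1 = L" using tt N_def by linarith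
      then show ?thesis using True by simp
    next
      case False
      then have "t div 2 + 1 < L" using tt N_def t by linarith
      then show ?thesis using False t tt by (simp add: mod_suc_eq)
    qed
  qed
  have dv: "distinct vs"
    unfolding distinct_conv_nth lv
  proof (intro allI impI)
    fix x y assume xy: "x < N" "y < N" "x \<noteq> y"
    have xd: "x div 2 < L" "y div 2 < L" using xy N_def by auto
    show "vs ! x \<noteq> vs ! y"
    proof (cases "even x"; cases "even y")
      assume "even x" "even y"
      then have "x = 2 * (x div 2)" "y = 2 * (y div 2)" by simp_all
      then have "x div 2 \<noteq> y div 2" using xy by metis
      then show ?thesis using \<open>even x\<close> \<open>even y\<close> vn xy xd dcs L_def by (simp add: nth_eq_iff_index_eq)
    next
      assume "even x" "odd y" then show ?thesis using vn xy by simp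
    next
      assume "odd x" "even y" then show ?thesis using vn xy by simp
    next
      assume "odd x" "odd y"
      then have "x = 2 * (x div 2) + 1" "y = 2 * (y div 2) + 1" by simp_all
      then have ne: "x div 2 \<noteq> y div 2" using xy by metis
      have "(x div 2 + 1) mod L \<noteq> (y div 2 + 1) mod L"
      proof
        assume "(x div 2 + 1) mod L = (y div 2 + 1) mod L"
        moreover have "(x div 2 + 1) mod L = (if x div 2 + 1 = L then 0 else x div 2 + 1)" by (rule mod_suc_eq[OF xd(1)])
        moreover have "(y div 2 + 1) mod L = (if y div 2 + 1 = L then 0 else y div 2 + 1)" by (rule mod_suc_eq[OF xd(2)])
        ultimately show False using ne by (simp split: if_splits)
      qed
      moreover have mx: "(x div 2 + 1) mod L < length c" using modL[OF xd(1)] L_def by simp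
      moreover have my: "(y div 2 + 1) mod L < length c" using modL[OF xd(2)] L_def by simp
      ultimately have "c ! ((x div 2 + 1) mod L) \<noteq> c ! ((y div 2 + 1) mod L)"
        using nth_eq_iff_index_eq[OF dcs mx my] by simp
      moreover have "c ! ((x div 2 + 1) mod L) \<in> {..<n}" using cn[OF modL[OF xd(1)]] by simp
      moreover have "c ! ((y div 2 + 1) mod L) \<in> {..<n}" using cn[OF modL[OF xd(2)]] by simp
      ultimately have "\<sigma> (c ! ((x div 2 + 1) mod L)) \<noteq> \<sigma> (c ! ((y div 2 + 1) mod L))"
        using inj_on_contraD[OF inj] by blast
      then show ?thesis using \<open>odd x\<close> \<open>odd y\<close> vn xy by simp
    qed
  qed
  have sv: "set vs \<subseteq> bip_vertices n"
  proof
    fix v assume "v \<in> set vs"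
    then obtain t where t: "t < N" "v = vs ! t" using lv by (auto simp: in_set_conv_nth)
    have td: "t div 2 < L" using t N_def by auto
    show "v \<in> bip_vertices n"
    proof (cases "even t")
      case True then show ?thesis using t vn cn td by (simp add: bip_vertices_def)
    next
      case False
      then have "(t div 2 + 1) mod L < L" using modL td by blast
      then have "c!((t div 2 + 1) mod L) < n" using cn by blast
      then have "\<sigma> (c!((t div 2 + 1) mod L)) < n" using sig by auto
      then show ?thesis using t vn False by (simp add: bip_vertices_def)
    qed
  qed
  have ce: "\<forall>t < length vs. col_edge \<sigma> B (cs ! t) (vs ! t) (vs ! ((t + 1) mod length vs))"
  proof (intro allI impI)
    fix t assume t: "t < length vs"
    then have tN: "t < N" using lv by simp
    have td: "t div 2 < L" using tN N_def by auto
    show "col_edge \<sigma> B (cs ! t) (vs ! t) (vs ! ((t + 1) mod length vs))"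
    proof (cases "even t")
      case True
      then have "t = 2 * (t div 2)" by simp
      then have "t + 1 < N" using td N_def by linarith
      then have "(t + 1) mod N = t + 1" by simp
      moreover have "(t + 1) div 2 = t div 2" "odd (t+1)" using True by auto
      ultimately have "vs ! ((t + 1) mod length vs) = Inr (\<sigma> (c!((t div 2 + 1) mod L)))"
        using vn \<open>t + 1 < N\<close> lv by simp
      moreover have "vs ! t = Inl (c!(t div 2))" using vn tN True by simp
      moreover have "cs ! t = False" using csn tN True by simp
      ultimately show ?thesis using arcs td unfolding col_edge_def by auto
    next
      case False
      have "vs ! ((t + 1) mod length vs) = Inl (c!((t div 2 + 1) mod L))"
        using oddnext[OF tN False] lv vn N_def modL td by simp
      moreover have "vs ! t = Inr (\<sigma> (c!((t div 2 + 1) mod L)))" using vn tN False by simp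
      moreover have "cs ! t = True" using csn tN False by simp
      ultimately show ?thesis unfolding col_edge_def by (auto simp: insert_commute)
    qed
  qed
  have alt: "\<forall>t < length vs. cs ! ((t + 1) mod length vs) \<noteq> cs ! t"
  proof (intro allI impI)
    fix t assume t: "t < length vs"
    then have tN: "t < N" using lv by simp
    have m: "(t + 1) mod N = (if t + 1 = N then 0 else t + 1)" by (rule mod_suc_eq[OF tN])
    show "cs ! ((t + 1) mod length vs) \<noteq> cs ! t"
    proof (cases "t + 1 = N")
      case True
      then have "odd t" using N_def by (metis even_mult_iff even_plus_one_iff even_numeral)
      then show ?thesis using True m csn tN lv N_def L2 by simp
    next
      case False
      then have "t + 1 < N" using tN by simp
      then show ?thesis using False m csn tN lv by simp
    qed
  qed
  have "alt_cycle n \<sigma> B vs cs"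
    unfolding alt_cycle_def using lv lcs L2 N_def dv sv ce alt by auto
  moreover have "lft (cycle_edges vs cs) = set c"
  proof -
    have "lft (cycle_edges vs cs) = {i. Inl i \<in> set vs}" using lv L2 N_def by (intro lft_cycle_edges) simp
    also have "\<dots> = set c"
    proof (intro equalityI subsetI)
      fix i assume "i \<in> {i. Inl i \<in> set vs}"
      then obtain t where t: "t < N" "vs ! t = Inl i" using lv by (auto simp: in_set_conv_nth)
      then have "even t" using vn by (cases "even t") auto
      then have "i = c ! (t div 2)" "t div 2 < L" using t vn N_def by auto
      then show "i \<in> set c" using L_def by simp
    next
      fix i assume "i \<in> set c"
      then obtain q where q: "q < L" "c ! q = i" using L_def by (auto simp: in_set_conv_nth)
      then have "vs ! (2*q) = Inl i" "2*q < N" using vn N_def by auto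
      then show "i \<in> {i. Inl i \<in> set vs}" using lv by (metis mem_Collect_eq nth_mem)
    qed
    finally show ?thesis .
  qed
  ultimately show ?thesis using lv N_def L_def by simp
qed

lemma expand_mono: "expand k V a \<Longrightarrow> W \<subseteq> V \<Longrightarrow> expand k W a"
  unfolding expand_def
proof (intro allI impI)
  fix S T assume ex: "\<forall>S T. S \<subseteq> V \<longrightarrow> T \<subseteq> V \<longrightarrow> card S = k \<longrightarrow> card T = k \<longrightarrow> S \<inter> T = {} \<longrightarrow> (\<exists>s\<in>S. \<exists>t\<in>T. a s t)"
    and W: "W \<subseteq> V" and h: "S \<subseteq> W" "T \<subseteq> W" "card S = k" "card T = k" "S \<inter> T = {}"
  have "S \<subseteq> V" "T \<subseteq> V" using h W by auto
  then show "\<exists>s\<in>S. \<exists>t\<in>T. a s t" using ex h by simp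
qed

lemma finite_lac: "finite (long_alt_cycles n \<sigma> B thr)"
proof -
  have fb: "finite (bip_vertices n)" by (simp add: bip_vertices_def)
  have "long_alt_cycles n \<sigma> B thr \<subseteq> Pow (UNIV \<times> Pow (bip_vertices n))"
  proof
    fix E assume "E \<in> long_alt_cycles n \<sigma> B thr"
    then obtain vs cs where E: "E = cycle_edges vs cs" "alt_cycle n \<sigma> B vs cs"
      unfolding long_alt_cycles_def by blast
    have "set vs \<subseteq> bip_vertices n" using E(2) unfolding alt_cycle_def by blast
    have "cycle_edges vs cs \<subseteq> UNIV \<times> Pow (bip_vertices n)"
    proof
      fix x assume "x \<in> cycle_edges vs cs"
      then obtain t where t: "t < length vs" "x = (cs ! t, {vs ! t, vs ! ((t + 1) mod length vs)})"
        unfolding cycle_edges_def by blast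
      have "0 < length vs" using t(1) by linarith
      then have "(t + 1) mod length vs < length vs" by (rule mod_less_divisor)
      then have "vs ! ((t + 1) mod length vs) \<in> set vs" by (rule nth_mem)
      moreover have "vs ! t \<in> set vs" using t(1) by (intro nth_mem)
      ultimately show "x \<in> UNIV \<times> Pow (bip_vertices n)" using t(2) \<open>set vs \<subseteq> bip_vertices n\<close> by auto
    qed
    then show "E \<in> Pow (UNIV \<times> Pow (bip_vertices n))" using E(1) by simp
  qed
  moreover have "finite (Pow (UNIV \<times> Pow (bip_vertices n)) :: (bool \<times> (nat+nat) set) set set)"
    using fb by simp
  ultimately show ?thesis by (rule finite_subset)
qed

definition WW :: "nat \<Rightarrow> nat set \<Rightarrow> nat set" where
  "WW m A = {v. v < 2*m \<and> (odd v \<longleftrightarrow> v div 2 \<in> A)}"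

lemma WW_image: "A \<subseteq> {..<m} \<Longrightarrow> WW m A = (\<lambda>j. 2*j + (if j \<in> A then 1 else 0)) ` {..<m}"
proof (intro equalityI subsetI)
  fix v assume A: "A \<subseteq> {..<m}" and v: "v \<in> WW m A"
  have v1: "v < 2*m" "odd v \<longleftrightarrow> v div 2 \<in> A" using v by (simp_all add: WW_def)
  have "v = 2 * (v div 2) + (if v div 2 \<in> A then 1 else 0)"
  proof (cases "odd v")
    case True
    then have "v div 2 \<in> A" using v1 by blast
    then show ?thesis using odd_two_times_div_two_succ[OF True] by simp
  next
    case False
    then have "v div 2 \<notin> A" using v1 by blast
    then show ?thesis using False by simp
  qed
  moreover have "v div 2 < m" using v1(1) by auto
  ultimately show "v \<in> (\<lambda>j. 2*j + (if j \<in> A then 1 else 0)) ` {..<m}" by (intro image_eqI[where x="v div 2"]) auto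
next
  fix v assume A: "A \<subseteq> {..<m}" and v: "v \<in> (\<lambda>j. 2*j + (if j \<in> A then 1 else 0)) ` {..<m}"
  then obtain j where j: "j < m" "v = 2*j + (if j \<in> A then 1 else 0)" by auto
  have "v < 2*m" using j by simp
  moreover have "v div 2 = j" using j by simp
  moreover have "odd v \<longleftrightarrow> j \<in> A" using j by simp
  ultimately show "v \<in> WW m A" unfolding WW_def by simp
qed

lemma card_WW: "A \<subseteq> {..<m} \<Longrightarrow> card (WW m A) = m"
proof -
  assume A: "A \<subseteq> {..<m}"
  have "inj_on (\<lambda>j. 2*j + (if j \<in> A then 1 else 0::nat)) {..<m}"
  proof (rule inj_onI)
    fix x y assume "2*x + (if x \<in> A then 1 else 0::nat) = 2*y + (if y \<in> A then 1 else 0)"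
    then have "(2*x + (if x \<in> A then 1 else 0::nat)) div 2 = (2*y + (if y \<in> A then 1 else 0)) div 2" by simp
    then show "x = y" by (simp split: if_splits)
  qed
  then show ?thesis using WW_image[OF A] by (simp add: card_image)
qed

lemma div2_inj_WW: "inj_on (\<lambda>v. v div 2) (WW m A)"
proof (rule inj_onI)
  fix v w assume "v \<in> WW m A" "w \<in> WW m A" "v div 2 = w div 2"
  then have "odd v \<longleftrightarrow> odd w" unfolding WW_def by auto
  then have "v mod 2 = w mod 2" by (simp add: mod2_eq_if)
  then show "v = w" using \<open>v div 2 = w div 2\<close> by (metis div_mult_mod_eq)
qed

lemma fiber_bound:
  assumes cV: "c0 \<le> card V" and fV: "finite V"
  shows "card {A \<in> Pow {..<m}. V \<subseteq> WW m A} \<le> 2 ^ (m - c0)"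
proof (cases "\<exists>A1 \<in> Pow {..<m}. V \<subseteq> WW m A1")
  case False
  then have "{A \<in> Pow {..<m}. V \<subseteq> WW m A} = {}" by blast
  then have "card {A \<in> Pow {..<m}. V \<subseteq> WW m A} = 0" by simp
  then show ?thesis by linarith
next
  case True
  then obtain A1 where A1: "A1 \<subseteq> {..<m}" "V \<subseteq> WW m A1" by auto
  define J where "J = (\<lambda>v. v div 2) ` V"
  define A0 where "A0 = (\<lambda>v. v div 2) ` {v \<in> V. odd v}"
  have cJ: "card J = card V" unfolding J_def
    using inj_on_subset[OF div2_inj_WW A1(2)] by (simp add: card_image)
  have Jm: "J \<subseteq> {..<m}" using A1(2) unfolding J_def WW_def by auto
  have sub: "{A \<in> Pow {..<m}. V \<subseteq> WW m A} \<subseteq> {A \<in> Pow {..<m}. A \<inter> J = A0}"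
  proof
    fix A assume "A \<in> {A \<in> Pow {..<m}. V \<subseteq> WW m A}"
    then have A: "A \<subseteq> {..<m}" "V \<subseteq> WW m A" by auto
    have "A \<inter> J = A0"
    proof (intro equalityI subsetI)
      fix j assume "j \<in> A \<inter> J"
      then obtain v where "v \<in> V" "j = v div 2" "j \<in> A" unfolding J_def by auto
      then have "odd v" using A(2) unfolding WW_def by auto
      then show "j \<in> A0" using \<open>v \<in> V\<close> \<open>j = v div 2\<close> unfolding A0_def by auto
    next
      fix j assume "j \<in> A0"
      then obtain v where "v \<in> V" "odd v" "j = v div 2" unfolding A0_def by auto
      then show "j \<in> A \<inter> J" using A(2) unfolding WW_def J_def by auto
    qed
    then show "A \<in> {A \<in> Pow {..<m}. A \<inter> J = A0}" using A by auto
  qed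
  have inj: "inj_on (\<lambda>A. A - J) {A \<in> Pow {..<m}. A \<inter> J = A0}"
  proof (rule inj_onI)
    fix A A' assume "A \<in> {A \<in> Pow {..<m}. A \<inter> J = A0}" "A' \<in> {A \<in> Pow {..<m}. A \<inter> J = A0}" "A - J = A' - J"
    then show "A = A'" by blast
  qed
  have img: "(\<lambda>A. A - J) ` {A \<in> Pow {..<m}. A \<inter> J = A0} \<subseteq> Pow ({..<m} - J)" by auto
  have "card {A \<in> Pow {..<m}. V \<subseteq> WW m A} \<le> card {A \<in> Pow {..<m}. A \<inter> J = A0}"
    by (rule card_mono[OF _ sub]) simp
  also have "\<dots> = card ((\<lambda>A. A - J) ` {A \<in> Pow {..<m}. A \<inter> J = A0})"
    using inj by (simp add: card_image)
  also have "\<dots> \<le> card (Pow ({..<m} - J))" by (rule card_mono[OF _ img]) simp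
  also have "\<dots> = 2 ^ (m - card J)"
  proof -
    have fJ: "finite J" using Jm finite_nat_iff_bounded by blast
    have "card ({..<m} - J) = m - card J" using card_Diff_subset[OF fJ Jm] by simp
    then show ?thesis by (simp add: card_Pow)
  qed
  also have "\<dots> \<le> 2 ^ (m - c0)" using cJ cV by (intro power_increasing) auto
  finally show ?thesis .
qed

lemma many_cycles:
  assumes bij: "bij_betw \<sigma> {..<n} {..<n}"
    and ex: "expand k {..<n} (\<lambda>i j. (i, \<sigma> j) \<in> B)" and k: "k \<ge> 1" and mk: "4*k \<le> n div 2"
    and thr: "thr \<le> real (2 * (n div 2 + 3 - 4*k))"
  shows "2 ^ (n div 2 + 3 - 4*k) \<le> card (long_alt_cycles n \<sigma> B thr)"
proof -
  define m where "m = n div 2"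
  define c0 where "c0 = m + 3 - 4*k"
  have c0m: "c0 \<le> m" using k c0_def by linarith
  have inj: "inj_on \<sigma> {..<n}" and sig: "\<sigma> ` {..<n} \<subseteq> {..<n}"
    using bij by (auto simp: bij_betw_def)
  let ?LAC = "long_alt_cycles n \<sigma> B thr"
  have good: "\<exists>E. E \<in> ?LAC \<and> lft E \<subseteq> WW m A \<and> c0 \<le> card (lft E) \<and> finite (lft E)"
    if A: "A \<subseteq> {..<m}" for A
  proof -
    have Wn: "WW m A \<subseteq> {..<n}" unfolding WW_def m_def by auto
    have fW: "finite (WW m A)" unfolding WW_def by auto
    have exW: "expand k (WW m A) (\<lambda>i j. (i, \<sigma> j) \<in> B)" by (rule expand_mono[OF ex Wn])
    obtain c where c: "dcycle (\<lambda>i j. (i, \<sigma> j) \<in> B) c" "set c \<subseteq> WW m A" "card (WW m A) + 3 \<le> length c + 4*k"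
      using exists_cycle[OF fW exW k] card_WW[OF A] mk m_def by auto
    have sc: "set c \<subseteq> {..<n}" using c(2) Wn by blast
    define vs where "vs = map (\<lambda>t. if even t then Inl (c!(t div 2)) else Inr (\<sigma> (c!((t div 2 + 1) mod length c)))) [0..<2*length c]"
    define cs where "cs = map odd [0..<2*length c]"
    have r: "alt_cycle n \<sigma> B vs cs \<and> length vs = 2 * length c \<and> lft (cycle_edges vs cs) = set c"
      unfolding vs_def cs_def by (rule alt_from_dcycle[OF inj sig c(1) sc])
    have lc: "c0 \<le> length c" using c(3) card_WW[OF A] c0_def by linarith
    have "real (length vs) \<ge> thr" using r lc thr c0_def m_def by simp
    then have "cycle_edges vs cs \<in> ?LAC" using r unfolding long_alt_cycles_def by blast
    moreover have "card (set c) = length c" using c(1) by (simp add: dcycle_def distinct_card)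
    ultimately show ?thesis
    proof (intro exI[where x="cycle_edges vs cs"] conjI)
      show "lft (cycle_edges vs cs) \<subseteq> WW m A" using r c(2) by simp
      show "c0 \<le> card (lft (cycle_edges vs cs))" using r lc \<open>card (set c) = length c\<close> by simp
      show "finite (lft (cycle_edges vs cs))" using r by simp
    qed
  qed
  define g where "g A = (SOME E. E \<in> ?LAC \<and> lft E \<subseteq> WW m A \<and> c0 \<le> card (lft E) \<and> finite (lft E))" for A
  have gA: "g A \<in> ?LAC \<and> lft (g A) \<subseteq> WW m A \<and> c0 \<le> card (lft (g A)) \<and> finite (lft (g A))"
    if "A \<subseteq> {..<m}" for A
    unfolding g_def by (rule someI_ex[OF good[OF that]])
  let ?P = "Pow {..<m}"
  have cov: "?P \<subseteq> (\<Union>E\<in>g ` ?P. {A \<in> ?P. lft E \<subseteq> WW m A})" using gA by blast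
  have "(2::nat) ^ m = card ?P" by (simp add: card_Pow)
  also have "\<dots> \<le> card (\<Union>E\<in>g ` ?P. {A \<in> ?P. lft E \<subseteq> WW m A})"
    by (rule card_mono[OF _ cov]) auto
  also have "\<dots> \<le> (\<Sum>E\<in>g ` ?P. card {A \<in> ?P. lft E \<subseteq> WW m A})"
    by (rule card_UN_le) auto
  also have "\<dots> \<le> (\<Sum>E\<in>g ` ?P. 2 ^ (m - c0))"
  proof (rule sum_mono)
    fix E assume "E \<in> g ` ?P"
    then obtain A where "A \<in> ?P" "E = g A" by auto
    then have "c0 \<le> card (lft E)" "finite (lft E)" using gA by auto
    then show "card {A \<in> ?P. lft E \<subseteq> WW m A} \<le> 2 ^ (m - c0)" by (rule fiber_bound)
  qed
  also have "\<dots> = card (g ` ?P) * 2 ^ (m - c0)" by simp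
  finally have h: "2 ^ m \<le> card (g ` ?P) * 2 ^ (m - c0)" .
  have "(2::nat) ^ m = 2 ^ c0 * 2 ^ (m - c0)" using c0m by (simp add: power_add[symmetric])
  with h have "2 ^ c0 * 2 ^ (m - c0) \<le> card (g ` ?P) * 2 ^ (m - c0)" by simp
  then have "2 ^ c0 \<le> card (g ` ?P)" by simp
  also have "\<dots> \<le> card ?LAC"
    using gA finite_lac by (intro card_mono) auto
  finally show ?thesis unfolding c0_def m_def .
qed

lemma pmf_bern_False_gen: "pmf (bernoulli_pmf p) False = 1 - min 1 (max 0 p)"
proof -
  interpret pmf_as_function .
  show ?thesis by transfer simp
qed

lemma bern_False_le: "0 \<le> p \<Longrightarrow> pmf (bernoulli_pmf p) False \<le> exp (- p)"
proof (cases "p \<le> 1")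
  case True
  assume "0 \<le> p"
  then have "pmf (bernoulli_pmf p) False = 1 - p" using True by simp
  also have "\<dots> \<le> exp (- p)" using exp_ge_add_one_self[of "-p"] by simp
  finally show ?thesis .
next
  case False
  then have "pmf (bernoulli_pmf p) False = 0" by (simp add: pmf_bern_False_gen)
  then show ?thesis by simp
qed

lemma prob_bad:
  fixes S T :: "nat set"
  assumes bij: "bij_betw \<sigma> {..<n} {..<n}" and S: "S \<subseteq> {..<n}" and T: "T \<subseteq> {..<n}" and D: "D \<ge> 0"
  shows "measure_pmf.prob (bip_ER n D) {f. \<forall>s\<in>S. \<forall>t\<in>T. \<not> f (s, \<sigma> t)}
           \<le> exp (- (D / real n)) ^ (card S * card T)"
proof -
  define A where "A = {..<n} \<times> {..<n}"
  define Q where "Q = S \<times> \<sigma> ` T"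
  define e where "e = exp (- (D / real n))"
  have inj: "inj_on \<sigma> {..<n}" and sig: "\<sigma> ` {..<n} \<subseteq> {..<n}" using bij by (auto simp: bij_betw_def)
  have QA: "Q \<subseteq> A" unfolding Q_def A_def using S T sig by auto
  have fA: "finite A" unfolding A_def by simp
  have ev: "{f. \<forall>s\<in>S. \<forall>t\<in>T. \<not> f (s, \<sigma> t)} = Pi A (\<lambda>x. if x \<in> Q then {False} else UNIV)"
  proof (intro equalityI subsetI)
    fix f assume "f \<in> {f. \<forall>s\<in>S. \<forall>t\<in>T. \<not> f (s, \<sigma> t)}"
    then have "\<forall>x\<in>Q. \<not> f x" unfolding Q_def by auto
    then show "f \<in> Pi A (\<lambda>x. if x \<in> Q then {False} else UNIV)" by (auto simp: Pi_def)
  next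
    fix f assume f: "f \<in> Pi A (\<lambda>x. if x \<in> Q then {False} else UNIV)"
    have "\<not> f (s, \<sigma> t)" if "s \<in> S" "t \<in> T" for s t
    proof -
      have "(s, \<sigma> t) \<in> Q" using that unfolding Q_def by auto
      then have "(s, \<sigma> t) \<in> A" using QA by auto
      then have "f (s, \<sigma> t) \<in> (if (s, \<sigma> t) \<in> Q then {False} else UNIV)" by (rule Pi_mem[OF f])
      then show ?thesis using \<open>(s, \<sigma> t) \<in> Q\<close> by simp
    qed
    then show "f \<in> {f. \<forall>s\<in>S. \<forall>t\<in>T. \<not> f (s, \<sigma> t)}" by auto
  qed
  have "measure_pmf.prob (bip_ER n D) {f. \<forall>s\<in>S. \<forall>t\<in>T. \<not> f (s, \<sigma> t)}
      = (\<Prod>x\<in>A. measure_pmf.prob (bernoulli_pmf (D / real n)) (if x \<in> Q then {False} else UNIV))"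
    unfolding ev bip_ER_def A_def by (rule measure_Pi_pmf_Pi) simp
  also have "\<dots> \<le> (\<Prod>x\<in>A. (if x \<in> Q then e else 1))"
  proof (rule prod_mono)
    fix x assume "x \<in> A"
    have "0 \<le> D / real n" using D by simp
    then have "pmf (bernoulli_pmf (D / real n)) False \<le> e" unfolding e_def by (rule bern_False_le)
    then show "0 \<le> measure_pmf.prob (bernoulli_pmf (D / real n)) (if x \<in> Q then {False} else UNIV) \<and>
          measure_pmf.prob (bernoulli_pmf (D / real n)) (if x \<in> Q then {False} else UNIV) \<le> (if x \<in> Q then e else 1)"
      by (simp add: measure_pmf_single)
  qed
  also have "\<dots> = (\<Prod>x\<in>Q. e)"
  proof -
    have "(\<Prod>x\<in>A. (if x \<in> Q then e else 1)) = (\<Prod>x\<in>A \<inter> Q. e)"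
      using fA by (simp add: prod.If_cases)
    also have "A \<inter> Q = Q" using QA by blast
    finally show ?thesis .
  qed
  also have "\<dots> = e ^ card Q" by simp
  also have "card Q = card S * card T"
  proof -
    have "inj_on \<sigma> T" using inj T inj_on_subset by blast
    then have "card (\<sigma> ` T) = card T" by (rule card_image)
    then show ?thesis unfolding Q_def by (simp add: card_cartesian_product)
  qed
  finally show ?thesis unfolding e_def .
qed

lemma prob_not_expand:
  assumes bij: "bij_betw \<sigma> {..<n} {..<n}" and D: "D \<ge> 0"
  shows "measure_pmf.prob (bip_ER n D) {f. \<not> expand k {..<n} (\<lambda>i j. (i, \<sigma> j) \<in> {e. f e})}
           \<le> real (n choose k) ^ 2 * exp (- (D / real n)) ^ (k * k)"
proof -
  define Ks where "Ks = {S. S \<subseteq> {..<n} \<and> card S = k}"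
  define I where "I = Ks \<times> Ks"
  define Bad where "Bad = (\<lambda>(S :: nat set, T :: nat set). {f :: nat \<times> nat \<Rightarrow> bool. \<forall>s\<in>S. \<forall>t\<in>T. \<not> f (s, \<sigma> t)})"
  have fKs: "finite Ks" unfolding Ks_def by simp
  have cKs: "card Ks = n choose k" unfolding Ks_def using n_subsets[of "{..<n}" k] by simp
  have fI: "finite I" unfolding I_def using fKs by simp
  have cI: "card I = (n choose k) ^ 2" unfolding I_def using cKs by (simp add: card_cartesian_product power2_eq_square)
  have sub: "{f. \<not> expand k {..<n} (\<lambda>i j. (i, \<sigma> j) \<in> {e. f e})} \<subseteq> (\<Union>i\<in>I. Bad i)"
  proof
    fix f assume "f \<in> {f. \<not> expand k {..<n} (\<lambda>i j. (i, \<sigma> j) \<in> {e. f e})}"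
    then obtain S T where ST: "S \<subseteq> {..<n}" "T \<subseteq> {..<n}" "card S = k" "card T = k"
      "\<not> (\<exists>s\<in>S. \<exists>t\<in>T. (s, \<sigma> t) \<in> {e. f e})"
      unfolding expand_def by blast
    then have "(S, T) \<in> I" unfolding I_def Ks_def by simp
    moreover have "f \<in> Bad (S, T)" using ST(5) unfolding Bad_def by simp
    ultimately show "f \<in> (\<Union>i\<in>I. Bad i)" by blast
  qed
  have "measure_pmf.prob (bip_ER n D) {f. \<not> expand k {..<n} (\<lambda>i j. (i, \<sigma> j) \<in> {e. f e})}
      \<le> measure_pmf.prob (bip_ER n D) (\<Union>i\<in>I. Bad i)"
    using sub by (intro measure_pmf.finite_measure_mono) simp_all
  also have "\<dots> \<le> (\<Sum>i\<in>I. measure_pmf.prob (bip_ER n D) (Bad i))"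
    using fI by (intro measure_pmf.finite_measure_subadditive_finite) simp_all
  also have "\<dots> \<le> (\<Sum>i\<in>I. exp (- (D / real n)) ^ (k * k))"
  proof (rule sum_mono)
    fix i assume "i \<in> I"
    then obtain S T where i: "i = (S, T)" "S \<subseteq> {..<n}" "T \<subseteq> {..<n}" "card S = k" "card T = k"
      unfolding I_def Ks_def by blast
    have "measure_pmf.prob (bip_ER n D) {f. \<forall>s\<in>S. \<forall>t\<in>T. \<not> f (s, \<sigma> t)}
           \<le> exp (- (D / real n)) ^ (card S * card T)" by (rule prob_bad[OF bij i(2) i(3) D])
    then show "measure_pmf.prob (bip_ER n D) (Bad i) \<le> exp (- (D / real n)) ^ (k * k)"
      using i unfolding Bad_def by simp
  qed
  also have "\<dots> = real (n choose k) ^ 2 * exp (- (D / real n)) ^ (k * k)" using cI by simp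
  finally show ?thesis .
qed

lemma fact_exp_bound: "(x::real) ^ k / fact k \<le> exp x" if "x \<ge> 0"
proof -
  have s: "(\<lambda>j. x ^ j / fact j) sums exp x"
    using exp_converges[of x] by (simp add: divide_inverse mult.commute)
  have "(\<Sum>j\<in>{k}. x ^ j / fact j) \<le> (\<Sum>j. x ^ j / fact j)"
    by (rule sum_le_suminf) (use s that in \<open>auto simp: sums_iff\<close>)
  then show ?thesis using s by (simp add: sums_iff)
qed

lemma numeric:
  fixes n k :: nat and D :: real
  assumes n: "n \<ge> 525" and k: "k = n div 40 + 1" and D: "D \<ge> 256 * ln (32 * exp 1)"
  shows "real (n choose k) ^ 2 * exp (- (D / real n)) ^ (k * k) \<le> exp (- D * real n / 2 ^ 14)"
proof -
  define N where "N = real n"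
  define K where "K = real k"
  have nk1: "n < 40 * k" using k by linarith
  have hK: "N < 40 * K" unfolding N_def K_def using nk1 by linarith
  have Npos: "N > 0" unfolding N_def using n by simp
  have Kpos: "K > 0" unfolding K_def using k by simp
  have ln2: "ln 2 \<ge> (2::real) / 3" by (rule ln2_ge_two_thirds)
  have "ln (32 * exp 1 :: real) = ln 32 + 1" by (simp add: ln_mult)
  also have "ln (32::real) = 5 * ln 2"
  proof -
    have "(32::real) = 2 ^ 5" by simp
    then have "ln (32::real) = ln (2 ^ 5)" by simp
    also have "\<dots> = 5 * ln 2" by (subst ln_realpow) auto
    finally show ?thesis .
  qed
  finally have "ln (32 * exp 1 :: real) \<ge> 13 / 3" using ln2 by linarith
  then have hD: "D \<ge> 1000" using D by linarith
  have e1: "exp (1::real) \<ge> 2" using exp_ge_add_one_self[of 1] by simp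
  have e7: "(40::real) \<le> exp 7"
  proof -
    have "exp (7::real) = exp 1 ^ 7" using exp_of_nat_mult[of 7 "1::real"] by simp
    moreover have "(2::real) ^ 7 \<le> exp 1 ^ 7" using e1 by (intro power_mono) auto
    ultimately show ?thesis by simp
  qed
  have ch: "real (n choose k) \<le> exp (8 * K)"
  proof -
    have "real (n choose k) * fact k \<le> N ^ k"
      using binomial_fact_pow[of n k] unfolding N_def by (metis of_nat_fact of_nat_le_iff of_nat_mult of_nat_power)
    also have "N ^ k \<le> (40 * K) ^ k" using hK Npos by (intro power_mono) auto
    also have "\<dots> = 40 ^ k * K ^ k" by (simp add: power_mult_distrib)
    also have "K ^ k \<le> exp K * fact k"
      using fact_exp_bound[of K k] Kpos by (simp add: divide_le_eq)
    finally have "real (n choose k) * fact k \<le> 40 ^ k * (exp K * fact k)" by simp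
    then have "real (n choose k) \<le> 40 ^ k * exp K" by (simp add: mult.assoc[symmetric])
    also have "(40::real) ^ k \<le> exp 7 ^ k" using e7 by (intro power_mono) auto
    also have "exp 7 ^ k = exp (7 * K)" unfolding K_def using exp_of_nat_mult[of k "7::real"] by (simp add: mult.commute)
    finally have "real (n choose k) \<le> exp (7 * K) * exp K" by simp
    also have "\<dots> = exp (8 * K)" by (simp add: exp_add[symmetric])
    finally show ?thesis .
  qed
  have ch2: "real (n choose k) ^ 2 \<le> exp (16 * K)"
  proof -
    have "real (n choose k) ^ 2 \<le> exp (8 * K) ^ 2" using ch by (intro power_mono) auto
    also have "\<dots> = exp (16 * K)" using exp_of_nat_mult[of 2 "8 * K"] by simp
    finally show ?thesis .
  qed
  have ex: "exp (- (D / real n)) ^ (k * k) = exp (- (D * K * K / N))"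
    using exp_of_nat_mult[of "k * k" "- (D / real n)"] unfolding K_def N_def by (simp add: algebra_simps)
  have key: "16 * K - D * K * K / N \<le> - D * N / 2 ^ 14"
  proof -
    have a: "D * K * K / N \<ge> D * K / 40"
    proof -
      have "D * K * K / N = (D * K) * (K / N)" by simp
      moreover have "K / N \<ge> 1 / 40" using hK Npos by (simp add: field_simps)
      moreover have "D * K \<ge> 0" using hD Kpos by simp
      ultimately show ?thesis by (metis mult_left_mono times_divide_eq_right mult_1_right)
    qed
    have b: "D * N / 2 ^ 14 \<le> 40 * D * K / 2 ^ 14" using hK hD by (simp add: divide_right_mono)
    have c: "16 * K + 40 * D * K / 2 ^ 14 \<le> D * K / 40"
    proof -
      have "16 + 40 * D / 2 ^ 14 \<le> D / 40" using hD by simp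
      then have "K * (16 + 40 * D / 2 ^ 14) \<le> K * (D / 40)" using Kpos by (intro mult_left_mono) auto
      then show ?thesis by (simp add: algebra_simps)
    qed
    show ?thesis using a b c by linarith
  qed
  have "real (n choose k) ^ 2 * exp (- (D / real n)) ^ (k * k) \<le> exp (16 * K) * exp (- (D * K * K / N))"
    unfolding ex by (intro mult_right_mono ch2) simp
  also have "\<dots> = exp (16 * K - D * K * K / N)" by (simp add: exp_add[symmetric])
  also have "\<dots> \<le> exp (- D * N / 2 ^ 14)" using key by simp
  finally show ?thesis unfolding N_def .
qed

theorem lemma7:
  fixes n :: nat and D :: real and \<sigma> :: "nat \<Rightarrow> nat"
  assumes "bij_betw \<sigma> {..<n} {..<n}"
    and "n \<ge> 525"
    and "D \<ge> 256 * ln (32 * exp 1)"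
  shows "measure_pmf.prob (bip_ER n D)
           {f. real (card (long_alt_cycles n \<sigma> {e. f e} (3 * real n / 4))) \<ge> exp (real n / 20)}
         \<ge> 1 - exp (- D * real n / 2 ^ 14)"
proof -
  note bij = assms(1)
  define k where "k = n div 40 + 1"
  define m where "m = n div 2"
  define c0 where "c0 = m + 3 - 4 * k"
  have "ln (32 * exp 1 :: real) > 0" using exp_ge_add_one_self[of "1::real"] by (intro ln_gt_zero) linarith
  then have D0: "D \<ge> 0" using assms(3) by linarith
  have d40: "40 * (n div 40) \<le> n" by presburger
  have d2: "n \<le> 2 * (n div 2) + 1" by presburger
  have k1: "k \<ge> 1" unfolding k_def by simp
  have mk: "4 * k \<le> n div 2" unfolding k_def using assms(2) by presburger
  have rc0: "real c0 = real m + 3 - 4 * real k" unfolding c0_def using mk m_def by simp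
  have rm: "real m \<ge> (real n - 1) / 2"
  proof -
    have "real n \<le> real (2 * (n div 2) + 1)" using d2 by (rule of_nat_mono)
    then show ?thesis unfolding m_def by simp
  qed
  have rk: "real k \<le> real n / 40 + 1"
  proof -
    have "real (40 * (n div 40)) \<le> real n" using d40 by (rule of_nat_mono)
    then show ?thesis unfolding k_def by simp
  qed
  have thr: "3 * real n / 4 \<le> real (2 * (n div 2 + 3 - 4 * k))"
  proof -
    have "real (2 * (n div 2 + 3 - 4 * k)) = 2 * real c0" unfolding c0_def m_def by simp
    then show ?thesis using rc0 rm rk assms(2) by simp
  qed
  have cnt: "exp (real n / 20) \<le> real (2 ^ (n div 2 + 3 - 4 * k))"
  proof -
    have "real (2 ^ (n div 2 + 3 - 4 * k)) = exp (real c0 * ln 2)"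
      unfolding c0_def m_def using exp_of_nat_mult[of "n div 2 + 3 - 4 * k" "ln (2::real)"] by simp
    moreover have "real n / 20 \<le> real c0 * ln 2"
    proof -
      have "real c0 \<ge> 0" by simp
      then have "real c0 * (2/3) \<le> real c0 * ln 2" using ln2_ge_two_thirds by (intro mult_left_mono) auto
      moreover have "real n / 20 \<le> real c0 * (2/3)" using rc0 rm rk assms(2) by simp
      ultimately show ?thesis by linarith
    qed
    ultimately show ?thesis by simp
  qed
  define Good where "Good = {f. expand k {..<n} (\<lambda>i j. (i, \<sigma> j) \<in> {e. f e})}"
  have GT: "Good \<subseteq> {f. real (card (long_alt_cycles n \<sigma> {e. f e} (3 * real n / 4))) \<ge> exp (real n / 20)}"
  proof
    fix f assume "f \<in> Good"
    then have ex: "expand k {..<n} (\<lambda>i j. (i, \<sigma> j) \<in> {e. f e})" unfolding Good_def by simp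
    have "2 ^ (n div 2 + 3 - 4 * k) \<le> card (long_alt_cycles n \<sigma> {e. f e} (3 * real n / 4))"
      by (rule many_cycles[OF bij ex k1 mk thr])
    then have "real (2 ^ (n div 2 + 3 - 4 * k)) \<le> real (card (long_alt_cycles n \<sigma> {e. f e} (3 * real n / 4)))"
      by (rule of_nat_mono)
    with cnt have "exp (real n / 20) \<le> real (card (long_alt_cycles n \<sigma> {e. f e} (3 * real n / 4)))"
      by (rule order_trans)
    then show "f \<in> {f. real (card (long_alt_cycles n \<sigma> {e. f e} (3 * real n / 4))) \<ge> exp (real n / 20)}"
      by (simp only: mem_Collect_eq)
  qed
  have bad: "measure_pmf.prob (bip_ER n D) {f. \<not> expand k {..<n} (\<lambda>i j. (i, \<sigma> j) \<in> {e. f e})}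
      \<le> exp (- D * real n / 2 ^ 14)"
    using prob_not_expand[OF bij D0, of k] numeric[OF assms(2) k_def assms(3)] by linarith
  have "UNIV - Good = {f. \<not> expand k {..<n} (\<lambda>i j. (i, \<sigma> j) \<in> {e. f e})}" unfolding Good_def by blast
  moreover have "measure_pmf.prob (bip_ER n D) (space (measure_pmf (bip_ER n D)) - Good)
      = 1 - measure_pmf.prob (bip_ER n D) Good"
    by (rule measure_pmf.prob_compl) simp
  ultimately have "measure_pmf.prob (bip_ER n D) Good
      = 1 - measure_pmf.prob (bip_ER n D) {f. \<not> expand k {..<n} (\<lambda>i j. (i, \<sigma> j) \<in> {e. f e})}"
    by simp
  then have "measure_pmf.prob (bip_ER n D) Good \<ge> 1 - exp (- D * real n / 2 ^ 14)" using bad by linarith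
  moreover have "measure_pmf.prob (bip_ER n D) Good \<le> measure_pmf.prob (bip_ER n D)
           {f. real (card (long_alt_cycles n \<sigma> {e. f e} (3 * real n / 4))) \<ge> exp (real n / 20)}"
    using GT by (intro measure_pmf.finite_measure_mono) simp_all
  ultimately show ?thesis by linarith
qed


end
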